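(* In the setting described in the context, assume that there exists a capacity $\mu:2^{\mathcal C}\to L$ with $S_\mu(x^{(k)})=\alpha^{(k)}$ for all $k$ (equivalently, $(S)$ is consistent and $e(\mathcal C)=1$; equivalently, $(\Sigma)$ is consistent and $f(\emptyset)=0$). Define $\mu_e(\emptyset)=0$, $\mu_e(A)=e(A)$ for $A\neq\emptyset$, and $\mu_f(\mathcal C)=1$, $\mu_f(A)=f(A)$ for $A\subsetneq\mathcal C$. Then: (i) $\mu_e$ is a capacity representing the training data, and it is the greatest such capacity; (ii) $\mu_f$ is a capacity representing the training data, and it is the lowest such capacity; (iii) every capacity $\mu:2^{\mathcal C}\to L$ representing the training data satisfies $\mu_f\le\mu\le\mu_e$ (pointwise on $2^{\mathcal C}$).
   Context: Let $\mathcal C=\{1,\dots,n\}$ and let $L$ be either a finite totally ordered set $0=\xi_1<\dots<\xi_l=1$ or $L=[0,1]$. A capacity is a map $\mu:2^{\mathcal C}\to L$ with $\mu(\emptyset)=0$, $\mu(\mathcal C)=1$, monotone for inclusion. Sugeno integral: $S_\mu(x)=\max_{A\subseteq\mathcal C}\min(\min_{i\in A}x_i,\mu(A))$ with $\min_{i\in\emptyset}x_i=1$. A capacity represents the training data $(x^{(k)},\alpha^{(k)})_{1\le k\le N}$ ($x^{(k)}\in L^n$, $\alpha^{(k)}\in L$) if $S_\mu(x^{(k)})=\alpha^{(k)}$ for all $k$. For nonempty $A$, $m_{k,A}=\min_{i\in A}x^{(k)}_i$; for $A\subsetneq\mathcal C$, $\gamma_{k,A}=\max_{i\in\mathcal C\setminus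 A}x^{(k)}_i$. $(S)$: unknowns $\xi_A$ ($A\ne\emptyset$), equations $\max_{A\ne\emptyset}\min(m_{k,A},\xi_A)=\alpha^{(k)}$; $(\Sigma)$: unknowns $\xi_A$ ($A\subsetneq\mathcal C$), equations $\min_{A\subsetneq\mathcal C}\max(\gamma_{k,A},\xi_A)=\alpha^{(k)}$. Gödel implication $a\to_G b=1$ if $a\le b$, else $b$; epsilon product $a\,\epsilon\,b=b$ if $a<b$, else $0$. $e(A)=\min_k(m_{k,A}\to_G\alpha^{(k)})$, $f(B)=\max_k(\gamma_{k,B}\,\epsilon\,\alpha^{(k)})$. *)

theory Defs
  imports Complex_Main
begin

definition crit :: "nat \<Rightarrow> nat set" where
  "crit n = {1..n}"

definition valid_scale :: "real set \<Rightarrow> bool" where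
  "valid_scale L \<longleftrightarrow> (finite L \<and> 0 \<in> L \<and> 1 \<in> L \<and> L \<subseteq> {0..1}) \<or> L = {0..1}"

definition capacity :: "real set \<Rightarrow> nat \<Rightarrow> (nat set \<Rightarrow> real) \<Rightarrow> bool" where
  "capacity L n \<mu> \<longleftrightarrow>
     \<mu> {} = 0 \<and> \<mu> (crit n) = 1 \<and>
     (\<forall>A B. A \<subseteq> B \<and> B \<subseteq> crit n \<longrightarrow> \<mu> A \<le> \<mu> B) \<and>
     (\<forall>A. A \<subseteq> crit n \<longrightarrow> \<mu> A \<in> L)"

definition minset :: "(nat \<Rightarrow> real) \<Rightarrow> nat set \<Rightarrow> real" where
  "minset x A = (if A = {} then 1 else Min (x ` A))"

definition sugeno :: "nat \<Rightarrow> (nat set \<Rightarrow> real) \<Rightarrow> (nat \<Rightarrow> real) \<Rightarrow> real" where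
  "sugeno n \<mu> x = Max ((\<lambda>A. min (minset x A) (\<mu> A)) ` Pow (crit n))"

definition represents :: "nat \<Rightarrow> nat \<Rightarrow> (nat \<Rightarrow> nat \<Rightarrow> real) \<Rightarrow> (nat \<Rightarrow> real)
    \<Rightarrow> (nat set \<Rightarrow> real) \<Rightarrow> bool" where
  "represents n N x \<alpha> \<mu> \<longleftrightarrow> (\<forall>k \<in> {1..N}. sugeno n \<mu> (x k) = \<alpha> k)"

definition godel_imp :: "real \<Rightarrow> real \<Rightarrow> real" where
  "godel_imp a b = (if a \<le> b then 1 else b)"

definition eps_prod :: "real \<Rightarrow> real \<Rightarrow> real" where
  "eps_prod a b = (if a < b then b else 0)"

definition m_val :: "(nat \<Rightarrow> nat \<Rightarrow> real) \<Rightarrow> nat \<Rightarrow> nat set \<Rightarrow> real" where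
  "m_val x k A = Min (x k ` A)"

definition gamma_val :: "nat \<Rightarrow> (nat \<Rightarrow> nat \<Rightarrow> real) \<Rightarrow> nat \<Rightarrow> nat set \<Rightarrow> real" where
  "gamma_val n x k A = Max (x k ` (crit n - A))"

text \<open>e(A) = min_k (m_{k,A} ->_G alpha_k); f(B) = max_k (gamma_{k,B} eps alpha_k).
  The extra 1 (resp. 0) only matters for N = 0 and is the neutral element.\<close>
definition e_fun :: "nat \<Rightarrow> (nat \<Rightarrow> nat \<Rightarrow> real) \<Rightarrow> (nat \<Rightarrow> real) \<Rightarrow> nat set \<Rightarrow> real" where
  "e_fun N x \<alpha> A = Min (insert 1 ((\<lambda>k. godel_imp (m_val x k A) (\<alpha> k)) ` {1..N}))"

definition f_fun :: "nat \<Rightarrow> nat \<Rightarrow> (nat \<Rightarrow> nat \<Rightarrow> real) \<Rightarrow> (nat \<Rightarrow> real) \<Rightarrow> nat set \<Rightarrow> real" where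
  "f_fun n N x \<alpha> B = Max (insert 0 ((\<lambda>k. eps_prod (gamma_val n x k B) (\<alpha> k)) ` {1..N}))"

definition mu_e :: "nat \<Rightarrow> (nat \<Rightarrow> nat \<Rightarrow> real) \<Rightarrow> (nat \<Rightarrow> real) \<Rightarrow> nat set \<Rightarrow> real" where
  "mu_e N x \<alpha> A = (if A = {} then 0 else e_fun N x \<alpha> A)"

definition mu_f :: "nat \<Rightarrow> nat \<Rightarrow> (nat \<Rightarrow> nat \<Rightarrow> real) \<Rightarrow> (nat \<Rightarrow> real) \<Rightarrow> nat set \<Rightarrow> real" where
  "mu_f n N x \<alpha> A = (if A = crit n then 1 else f_fun n N x \<alpha> A)"

end

theory Submission
  imports Defs
begin

lemma fin_crit[simp]: "finite (crit n)" by (simp add: crit_def)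

lemma sug_le: "sugeno n \<mu> y \<le> c \<longleftrightarrow> (\<forall>A\<in>Pow (crit n). min (minset y A) (\<mu> A) \<le> c)"
  unfolding sugeno_def by (subst Max_le_iff) auto

lemma sug_ge: "c \<le> sugeno n \<mu> y \<longleftrightarrow> (\<exists>A\<in>Pow (crit n). c \<le> min (minset y A) (\<mu> A))"
  unfolding sugeno_def by (subst Max_ge_iff) auto

lemma sug_mono:
  assumes "\<forall>A\<in>Pow (crit n). \<mu> A \<le> \<nu> A"
  shows "sugeno n \<mu> y \<le> sugeno n \<nu> y"
proof -
  have "\<forall>A\<in>Pow (crit n). min (minset y A) (\<mu> A) \<le> sugeno n \<nu> y"
  proof
    fix A assume A: "A \<in> Pow (crit n)"
    have "min (minset y A) (\<mu> A) \<le> min (minset y A) (\<nu> A)" using bspec[OF assms A] by (auto simp: min_def)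
    also have "\<dots> \<le> sugeno n \<nu> y" unfolding sug_ge using A order_refl by blast
    finally show "min (minset y A) (\<mu> A) \<le> sugeno n \<nu> y" .
  qed
  then show ?thesis using sug_le by blast
qed

lemma e_ge: "c \<le> e_fun N x \<alpha> A \<longleftrightarrow> c \<le> 1 \<and> (\<forall>k\<in>{1..N}. c \<le> godel_imp (m_val x k A) (\<alpha> k))"
  unfolding e_fun_def by (subst Min_ge_iff) auto

lemma e_le: "k \<in> {1..N} \<Longrightarrow> e_fun N x \<alpha> A \<le> godel_imp (m_val x k A) (\<alpha> k)"
  unfolding e_fun_def by (rule Min_le) auto

lemma e_le1: "e_fun N x \<alpha> A \<le> 1"
  unfolding e_fun_def by (rule Min_le) auto

lemma e_in: "e_fun N x \<alpha> A \<in> insert 1 (\<alpha> ` {1..N})"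
proof -
  have "e_fun N x \<alpha> A \<in> insert 1 ((\<lambda>k. godel_imp (m_val x k A) (\<alpha> k)) ` {1..N})"
    unfolding e_fun_def by (rule Min_in) auto
  then show ?thesis by (auto simp: godel_imp_def split: if_splits)
qed

lemma f_le: "f_fun n N x \<alpha> A \<le> c \<longleftrightarrow> 0 \<le> c \<and> (\<forall>k\<in>{1..N}. eps_prod (gamma_val n x k A) (\<alpha> k) \<le> c)"
  unfolding f_fun_def by (subst Max_le_iff) auto

lemma f_ge: "k \<in> {1..N} \<Longrightarrow> eps_prod (gamma_val n x k A) (\<alpha> k) \<le> f_fun n N x \<alpha> A"
  unfolding f_fun_def by (rule Max_ge) auto

lemma f_ge0: "0 \<le> f_fun n N x \<alpha> A"
  unfolding f_fun_def by (rule Max_ge) auto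

lemma f_in: "f_fun n N x \<alpha> A \<in> insert 0 (\<alpha> ` {1..N})"
proof -
  have "f_fun n N x \<alpha> A \<in> insert 0 ((\<lambda>k. eps_prod (gamma_val n x k A) (\<alpha> k)) ` {1..N})"
    unfolding f_fun_def by (rule Max_in) auto
  then show ?thesis by (auto simp: eps_prod_def split: if_splits)
qed

theorem corollary1:
  fixes L :: "real set" and n N :: nat
    and x :: "nat \<Rightarrow> nat \<Rightarrow> real" and \<alpha> :: "nat \<Rightarrow> real"
  assumes scale: "valid_scale L"
    and data_x: "\<forall>k \<in> {1..N}. \<forall>i \<in> crit n. x k i \<in> L"
    and data_alpha: "\<forall>k \<in> {1..N}. \<alpha> k \<in> L"
    and exists: "\<exists>\<mu>. capacity L n \<mu> \<and> represents n N x \<alpha> \<mu>"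
  shows
    "(capacity L n (mu_e N x \<alpha>) \<and> represents n N x \<alpha> (mu_e N x \<alpha>) \<and>
      (\<forall>\<mu>. capacity L n \<mu> \<and> represents n N x \<alpha> \<mu> \<longrightarrow>
            (\<forall>A \<subseteq> crit n. \<mu> A \<le> mu_e N x \<alpha> A)))
   \<and> (capacity L n (mu_f n N x \<alpha>) \<and> represents n N x \<alpha> (mu_f n N x \<alpha>) \<and>
      (\<forall>\<mu>. capacity L n \<mu> \<and> represents n N x \<alpha> \<mu> \<longrightarrow>
            (\<forall>A \<subseteq> crit n. mu_f n N x \<alpha> A \<le> \<mu> A)))
   \<and> (\<forall>\<mu>. capacity L n \<mu> \<and> represents n N x \<alpha> \<mu> \<longrightarrow>
            (\<forall>A \<subseteq> crit n. mu_f n N x \<alpha> A \<le> \<mu> A \<and> \<mu> A \<le> mu_e N x \<alpha> A))"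
proof -
  have L01: "L \<subseteq> {0..1}" "0 \<in> L" "1 \<in> L" using scale unfolding valid_scale_def by auto
  obtain \<mu>0 where cap0: "capacity L n \<mu>0" and rep0: "represents n N x \<alpha> \<mu>0" using exists by blast
  have Cne: "crit n \<noteq> {}" using cap0 unfolding capacity_def by auto
  have x01: "0 \<le> x k i \<and> x k i \<le> 1" if "k \<in> {1..N}" "i \<in> crit n" for k i
    using data_x that L01 by fastforce
  have a01: "0 \<le> \<alpha> k \<and> \<alpha> k \<le> 1" if "k \<in> {1..N}" for k
    using data_alpha that L01 by fastforce
  have ms: "minset (x k) A = m_val x k A" if "A \<noteq> {}" for k A
    using that by (simp add: minset_def m_val_def)
  have mle: "m_val x k A \<le> x k i" if "A \<subseteq> crit n" "i \<in> A" for k A i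
    unfolding m_val_def using that finite_subset[OF that(1)] by (intro Min_le) auto
  have mmono: "m_val x k B \<le> m_val x k A" if "A \<subseteq> B" "B \<subseteq> crit n" "A \<noteq> {}" for k A B
    unfolding m_val_def using that finite_subset[OF that(2)] by (intro Min_antimono) auto
  have gmono: "gamma_val n x k B \<le> gamma_val n x k A" if "A \<subseteq> B" "B \<subset> crit n" for k A B
    unfolding gamma_val_def using that by (intro Max_mono) auto
  have gge: "x k i \<le> gamma_val n x k A" if "i \<in> crit n - A" for k A i
    unfolding gamma_val_def using that by (intro Max_ge) auto
  have rep_eq: "sugeno n \<mu> (x k) = \<alpha> k" if "represents n N x \<alpha> \<mu>" "k \<in> {1..N}" for \<mu> k
    using that unfolding represents_def by auto
  have capmono: "\<mu> A \<le> \<mu> B" if "capacity L n \<mu>" "A \<subseteq> B" "B \<subseteq> crit n" for \<mu> A B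
    using that unfolding capacity_def by blast

  have great: "\<forall>A \<subseteq> crit n. \<mu> A \<le> mu_e N x \<alpha> A" if c: "capacity L n \<mu>" and r: "represents n N x \<alpha> \<mu>" for \<mu>
  proof (intro allI impI)
    fix A assume A: "A \<subseteq> crit n"
    show "\<mu> A \<le> mu_e N x \<alpha> A"
    proof (cases "A = {}")
      case True then show ?thesis using c by (simp add: capacity_def mu_e_def)
    next
      case False
      have "\<mu> A \<le> 1" using capmono[OF c A] c by (simp add: capacity_def)
      moreover have "\<mu> A \<le> godel_imp (m_val x k A) (\<alpha> k)" if k: "k \<in> {1..N}" for k
      proof -
        have "min (minset (x k) A) (\<mu> A) \<le> \<alpha> k"
          using sug_le[of n \<mu> "x k" "\<alpha> k"] rep_eq[OF r k] A by auto
        then show ?thesis using ms[OF False] \<open>\<mu> A \<le> 1\<close> by (auto simp: godel_imp_def)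
      qed
      ultimately show ?thesis using False e_ge by (simp add: mu_e_def)
    qed
  qed
  have low: "\<forall>A \<subseteq> crit n. mu_f n N x \<alpha> A \<le> \<mu> A" if c: "capacity L n \<mu>" and r: "represents n N x \<alpha> \<mu>" for \<mu>
  proof (intro allI impI)
    fix A assume A: "A \<subseteq> crit n"
    show "mu_f n N x \<alpha> A \<le> \<mu> A"
    proof (cases "A = crit n")
      case True then show ?thesis using c by (simp add: capacity_def mu_f_def)
    next
      case False
      have "0 \<le> \<mu> A" using capmono[OF c _ A, of "{}"] c by (simp add: capacity_def)
      moreover have "eps_prod (gamma_val n x k A) (\<alpha> k) \<le> \<mu> A" if k: "k \<in> {1..N}" for k
      proof (cases "gamma_val n x k A < \<alpha> k")
        case lt: True
        obtain B where B: "B \<subseteq> crit n" "\<alpha> k \<le> min (minset (x k) B) (\<mu> B)"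
          using sug_ge[of "\<alpha> k" n \<mu> "x k"] rep_eq[OF r k] by auto
        have "B \<subseteq> A"
        proof
          fix i assume i: "i \<in> B"
          show "i \<in> A"
          proof (rule ccontr)
            assume "i \<notin> A"
            then have "x k i \<le> gamma_val n x k A" using gge i B by auto
            moreover have "minset (x k) B \<le> x k i" using ms[of B k] mle[OF B(1) i, of k] i by (metis empty_iff order_refl)
            ultimately show False using B lt by auto
          qed
        qed
        then have "\<mu> B \<le> \<mu> A" using capmono[OF c _ A] by auto
        then show ?thesis using lt B by (auto simp: eps_prod_def)
      next
        case False then show ?thesis using \<open>0 \<le> \<mu> A\<close> by (auto simp: eps_prod_def)
      qed
      ultimately show ?thesis using False f_le by (simp add: mu_f_def)
    qed
  qed

  have capE: "capacity L n (mu_e N x \<alpha>)"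
    unfolding capacity_def
  proof (intro conjI allI impI)
    show "mu_e N x \<alpha> {} = 0" by (simp add: mu_e_def)
    have "1 \<le> godel_imp (m_val x k (crit n)) (\<alpha> k)" if k: "k \<in> {1..N}" for k
    proof -
      obtain i where i: "i \<in> crit n" using Cne by auto
      have m1: "m_val x k (crit n) \<le> 1" using mle[OF _ i, of k] x01[OF k i] by auto
      have "min (minset (x k) (crit n)) (\<mu>0 (crit n)) \<le> \<alpha> k"
        using sug_le[of n \<mu>0 "x k" "\<alpha> k"] rep_eq[OF rep0 k] by auto
      then have "m_val x k (crit n) \<le> \<alpha> k" using ms[OF Cne] cap0 m1 by (simp add: capacity_def)
      then show ?thesis by (simp add: godel_imp_def)
    qed
    then have "1 \<le> e_fun N x \<alpha> (crit n)" using e_ge by auto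
    then show "mu_e N x \<alpha> (crit n) = 1" using e_le1[of N x \<alpha> "crit n"] Cne by (simp add: mu_e_def)
  next
    fix A B :: "nat set" assume AB: "A \<subseteq> B \<and> B \<subseteq> crit n"
    show "mu_e N x \<alpha> A \<le> mu_e N x \<alpha> B"
    proof (cases "A = {}")
      case True
      have "0 \<le> e_fun N x \<alpha> B" using e_ge[of 0 N x \<alpha> B] a01 by (auto simp: godel_imp_def)
      then show ?thesis using True by (simp add: mu_e_def)
    next
      case False
      then have Bne: "B \<noteq> {}" using AB by auto
      have "e_fun N x \<alpha> A \<le> godel_imp (m_val x k B) (\<alpha> k)" if k: "k \<in> {1..N}" for k
      proof -
        have 1: "e_fun N x \<alpha> A \<le> godel_imp (m_val x k A) (\<alpha> k)" using e_le[OF k] .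
        have "m_val x k B \<le> m_val x k A" using mmono AB False by auto
        then show ?thesis using 1 e_le1[of N x \<alpha> A] by (auto simp: godel_imp_def)
      qed
      then have "e_fun N x \<alpha> A \<le> e_fun N x \<alpha> B" using e_ge e_le1 by blast
      then show ?thesis using False Bne by (simp add: mu_e_def)
    qed
  next
    fix A :: "nat set" assume "A \<subseteq> crit n"
    show "mu_e N x \<alpha> A \<in> L" using e_in[of N x \<alpha> A] L01 data_alpha by (auto simp: mu_e_def)
  qed
  have repE: "represents n N x \<alpha> (mu_e N x \<alpha>)"
    unfolding represents_def
  proof
    fix k assume k: "k \<in> {1..N}"
    have "\<forall>A\<in>Pow (crit n). min (minset (x k) A) (mu_e N x \<alpha> A) \<le> \<alpha> k"
    proof
      fix A assume A: "A \<in> Pow (crit n)"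
      show "min (minset (x k) A) (mu_e N x \<alpha> A) \<le> \<alpha> k"
      proof (cases "A = {}")
        case True then show ?thesis using a01[OF k] by (simp add: mu_e_def minset_def)
      next
        case False
        then show ?thesis using e_le[OF k, where A=A and x=x and \<alpha>=\<alpha>] ms[OF False, of k]
          by (auto simp: mu_e_def godel_imp_def split: if_splits)
      qed
    qed
    then have "sugeno n (mu_e N x \<alpha>) (x k) \<le> \<alpha> k" using sug_le by blast
    moreover have "\<alpha> k \<le> sugeno n (mu_e N x \<alpha>) (x k)"
      using sug_mono[of n \<mu>0 "mu_e N x \<alpha>" "x k"] great[OF cap0 rep0] rep_eq[OF rep0 k] by auto
    ultimately show "sugeno n (mu_e N x \<alpha>) (x k) = \<alpha> k" by auto
  qed

  have capF: "capacity L n (mu_f n N x \<alpha>)"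
    unfolding capacity_def
  proof (intro conjI allI impI)
    show "mu_f n N x \<alpha> (crit n) = 1" by (simp add: mu_f_def)
    have "eps_prod (gamma_val n x k {}) (\<alpha> k) \<le> 0" if k: "k \<in> {1..N}" for k
    proof -
      obtain i where i: "i \<in> crit n" using Cne by auto
      have g0: "0 \<le> gamma_val n x k {}" using gge[of i "{}" k] i x01[OF k i] by auto
      have "\<forall>A\<in>Pow (crit n). min (minset (x k) A) (\<mu>0 A) \<le> gamma_val n x k {}"
      proof
        fix A assume A: "A \<in> Pow (crit n)"
        show "min (minset (x k) A) (\<mu>0 A) \<le> gamma_val n x k {}"
        proof (cases "A = {}")
          case True then show ?thesis using cap0 g0 by (simp add: capacity_def)
        next
          case False
          then obtain j where j: "j \<in> A" by auto
          have "minset (x k) A \<le> x k j" using ms[OF False] mle[of A j k] A j by auto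
          also have "\<dots> \<le> gamma_val n x k {}" using gge[of j "{}" k] A j by auto
          finally show ?thesis by auto
        qed
      qed
      then have "\<alpha> k \<le> gamma_val n x k {}" using sug_le rep_eq[OF rep0 k] by metis
      then show ?thesis by (simp add: eps_prod_def)
    qed
    then have "f_fun n N x \<alpha> {} \<le> 0" using f_le by auto
    then show "mu_f n N x \<alpha> {} = 0" using f_ge0[of n N x \<alpha> "{}"] Cne
      by (simp add: mu_f_def)
  next
    fix A B :: "nat set" assume AB: "A \<subseteq> B \<and> B \<subseteq> crit n"
    have f1: "f_fun n N x \<alpha> A \<le> 1" using f_in[of n N x \<alpha> A] a01 by auto
    show "mu_f n N x \<alpha> A \<le> mu_f n N x \<alpha> B"
    proof (cases "B = crit n")
      case True then show ?thesis using f1 by (simp add: mu_f_def)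
    next
      case False
      then have Ane: "A \<noteq> crit n" using AB by auto
      have "eps_prod (gamma_val n x k A) (\<alpha> k) \<le> f_fun n N x \<alpha> B" if k: "k \<in> {1..N}" for k
      proof -
        have "gamma_val n x k B \<le> gamma_val n x k A" using gmono AB False by auto
        then have "eps_prod (gamma_val n x k A) (\<alpha> k) \<le> eps_prod (gamma_val n x k B) (\<alpha> k)"
          using a01[OF k] by (auto simp: eps_prod_def)
        then show ?thesis using f_ge[OF k, where n=n and x=x and A=B and \<alpha>=\<alpha>] by auto
      qed
      then have "f_fun n N x \<alpha> A \<le> f_fun n N x \<alpha> B" using f_le f_ge0 by blast
      then show ?thesis using False Ane by (simp add: mu_f_def)
    qed
  next
    fix A :: "nat set" assume "A \<subseteq> crit n"
    show "mu_f n N x \<alpha> A \<in> L" using f_in[of n N x \<alpha> A] L01 data_alpha by (auto simp: mu_f_def)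
  qed
  have repF: "represents n N x \<alpha> (mu_f n N x \<alpha>)"
    unfolding represents_def
  proof
    fix k assume k: "k \<in> {1..N}"
    have "sugeno n (mu_f n N x \<alpha>) (x k) \<le> \<alpha> k"
      using sug_mono[of n "mu_f n N x \<alpha>" \<mu>0 "x k"] low[OF cap0 rep0] rep_eq[OF rep0 k] by auto
    moreover have "\<alpha> k \<le> sugeno n (mu_f n N x \<alpha>) (x k)"
    proof -
      define A0 where "A0 = {i \<in> crit n. \<alpha> k \<le> x k i}"
      have A0: "A0 \<subseteq> crit n" by (auto simp: A0_def)
      have m: "\<alpha> k \<le> minset (x k) A0"
      proof (cases "A0 = {}")
        case True then show ?thesis using a01[OF k] by (simp add: minset_def)
      next
        case False
        have "finite A0" using finite_subset[OF A0 fin_crit] .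
        then show ?thesis using False by (simp add: minset_def Min_ge_iff, auto simp: A0_def)
      qed
      have f: "\<alpha> k \<le> mu_f n N x \<alpha> A0"
      proof (cases "A0 = crit n")
        case True then show ?thesis using a01[OF k] by (simp add: mu_f_def)
      next
        case False
        then have ne: "crit n - A0 \<noteq> {}" using A0 by auto
        have "gamma_val n x k A0 < \<alpha> k"
          unfolding gamma_val_def using ne by (subst Max_less_iff) (auto simp: A0_def)
        then have "\<alpha> k \<le> f_fun n N x \<alpha> A0" using f_ge[OF k, where n=n and x=x and A=A0 and \<alpha>=\<alpha>] by (auto simp: eps_prod_def)
        then show ?thesis using False by (simp add: mu_f_def)
      qed
      show ?thesis using sug_ge[of "\<alpha> k" n "mu_f n N x \<alpha>" "x k"] A0 m f by auto
    qed
    ultimately show "sugeno n (mu_f n N x \<alpha>) (x k) = \<alpha> k" by auto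
  qed
  show ?thesis using capE repE great capF repF low by blast
qed

end
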